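(* Let $B$ be a Lie algebra over a field $k$ satisfying $\Phi1$: $\forall x_1,\dots,x_4\ (x_1x_2)(x_3x_4)=0$, $\Phi2$: $\forall x,y\ (xyx=0\wedge xyy=0\to xy=0)$ and $\Phi3$: $\forall x,y,z\ (x\ne0\wedge xy=0\wedge xz=0\to yz=0)$. Then the set $\{b\in B: B\models \mathrm{Fit}(b)\}$, where $\mathrm{Fit}(x)\equiv\forall y\,(xyx=0)$, equals $\mathrm{Fit}(B)$. If moreover $B$ is an $F_r$-algebra, then the set $\{b\in B: bа_ib=0 \text{ for all } i=1,\dots,r\}$, i.e. the truth domain of $\mathrm{Fit}'(x)\equiv\bigwedge_{i=1}^r(xa_ix=0)$, also equals $\mathrm{Fit}(B)$.
   Context: Products are left-normed: $xyx=(xy)x$. $\mathrm{Fit}(B)$ is the sum of all nilpotent ideals of $B$. $F_r$ is the free metabelian Lie algebra over $k$ of rank $r\ge 2$ with free base $a_1,\dots,a_r$; an $F_r$-algebra is a Lie algebra containing a designated copy of $F_r$ (so $a_1,\dots,a_r\in B$). *)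

theory Defs
  imports Complex_Main
begin

(* A Lie algebra over a field 'k is represented by a type 'b (the whole algebra B)
   with a k-module structure "scale" and a bracket "br" (products left-normed:
   x y z = br (br x y) z). *)

definition lie_algebra :: "('k::field \<Rightarrow> 'b::ab_group_add \<Rightarrow> 'b) \<Rightarrow> ('b \<Rightarrow> 'b \<Rightarrow> 'b) \<Rightarrow> bool" where
  "lie_algebra scale br \<longleftrightarrow>
     module scale \<and>
     (\<forall>x y z. br (x + y) z = br x z + br y z) \<and>
     (\<forall>x y z. br x (y + z) = br x y + br x z) \<and>
     (\<forall>c x y. br (scale c x) y = scale c (br x y)) \<and>
     (\<forall>c x y. br x (scale c y) = scale c (br x y)) \<and>
     (\<forall>x. br x x = 0) \<and>
     (\<forall>x y z. br (br x y) z + br (br y z) x + br (br z x) y = 0)"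

definition lie_ideal :: "('k::field \<Rightarrow> 'b::ab_group_add \<Rightarrow> 'b) \<Rightarrow> ('b \<Rightarrow> 'b \<Rightarrow> 'b) \<Rightarrow> 'b set \<Rightarrow> bool" where
  "lie_ideal scale br I \<longleftrightarrow> module.subspace scale I \<and> (\<forall>x\<in>I. \<forall>y. br x y \<in> I)"

(* lower central series of a subspace I (viewed as a Lie algebra):
   I^1 = I, I^(n+1) = span [I^n, I]; index shifted to start at 0 *)
fun lower_central :: "('k::field \<Rightarrow> 'b::ab_group_add \<Rightarrow> 'b) \<Rightarrow> ('b \<Rightarrow> 'b \<Rightarrow> 'b) \<Rightarrow> 'b set \<Rightarrow> nat \<Rightarrow> 'b set" where
  "lower_central scale br I 0 = I"
| "lower_central scale br I (Suc n) =
     module.span scale {br x y | x y. x \<in> lower_central scale br I n \<and> y \<in> I}"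

definition nilpotent_ideal :: "('k::field \<Rightarrow> 'b::ab_group_add \<Rightarrow> 'b) \<Rightarrow> ('b \<Rightarrow> 'b \<Rightarrow> 'b) \<Rightarrow> 'b set \<Rightarrow> bool" where
  "nilpotent_ideal scale br I \<longleftrightarrow> lie_ideal scale br I \<and> (\<exists>n. lower_central scale br I n = {0})"

definition fitting :: "('k::field \<Rightarrow> 'b::ab_group_add \<Rightarrow> 'b) \<Rightarrow> ('b \<Rightarrow> 'b \<Rightarrow> 'b) \<Rightarrow> 'b set" where
  "fitting scale br = module.span scale (\<Union>{I. nilpotent_ideal scale br I})"

datatype 'k lterm = LVar nat | LZero | LAdd "'k lterm" "'k lterm" | LNeg "'k lterm"
  | LSmul 'k "'k lterm" | LBr "'k lterm" "'k lterm"

fun lvars :: "'k lterm \<Rightarrow> nat set" where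
  "lvars (LVar i) = {i}"
| "lvars LZero = {}"
| "lvars (LAdd s t) = lvars s \<union> lvars t"
| "lvars (LNeg t) = lvars t"
| "lvars (LSmul c t) = lvars t"
| "lvars (LBr s t) = lvars s \<union> lvars t"

fun leval :: "('k \<Rightarrow> 'b::ab_group_add \<Rightarrow> 'b) \<Rightarrow> ('b \<Rightarrow> 'b \<Rightarrow> 'b) \<Rightarrow> (nat \<Rightarrow> 'b) \<Rightarrow> 'k lterm \<Rightarrow> 'b" where
  "leval scale br a (LVar i) = a i"
| "leval scale br a LZero = 0"
| "leval scale br a (LAdd s t) = leval scale br a s + leval scale br a t"
| "leval scale br a (LNeg t) = - leval scale br a t"
| "leval scale br a (LSmul c t) = scale c (leval scale br a t)"
| "leval scale br a (LBr s t) = br (leval scale br a s) (leval scale br a t)"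

(* Equational theory of metabelian Lie algebras over 'k: the free metabelian Lie
   algebra on the variables is the term algebra modulo this congruence. *)
inductive meq :: "'k::field lterm \<Rightarrow> 'k lterm \<Rightarrow> bool" where
  refl: "meq t t"
| sym: "meq s t \<Longrightarrow> meq t s"
| trans: "meq s t \<Longrightarrow> meq t u \<Longrightarrow> meq s u"
| cong_add: "meq s s' \<Longrightarrow> meq t t' \<Longrightarrow> meq (LAdd s t) (LAdd s' t')"
| cong_neg: "meq s s' \<Longrightarrow> meq (LNeg s) (LNeg s')"
| cong_smul: "meq s s' \<Longrightarrow> meq (LSmul c s) (LSmul c s')"
| cong_br: "meq s s' \<Longrightarrow> meq t t' \<Longrightarrow> meq (LBr s t) (LBr s' t')"
| add_assoc: "meq (LAdd (LAdd s t) u) (LAdd s (LAdd t u))"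
| add_comm: "meq (LAdd s t) (LAdd t s)"
| add_zero: "meq (LAdd t LZero) t"
| add_neg: "meq (LAdd t (LNeg t)) LZero"
| smul_add_scalar: "meq (LSmul (c + d) t) (LAdd (LSmul c t) (LSmul d t))"
| smul_add_vec: "meq (LSmul c (LAdd s t)) (LAdd (LSmul c s) (LSmul c t))"
| smul_mult: "meq (LSmul (c * d) t) (LSmul c (LSmul d t))"
| smul_one: "meq (LSmul 1 t) t"
| br_add_left: "meq (LBr (LAdd s t) u) (LAdd (LBr s u) (LBr t u))"
| br_add_right: "meq (LBr u (LAdd s t)) (LAdd (LBr u s) (LBr u t))"
| br_smul_left: "meq (LBr (LSmul c s) t) (LSmul c (LBr s t))"
| br_smul_right: "meq (LBr s (LSmul c t)) (LSmul c (LBr s t))"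
| br_alt: "meq (LBr t t) LZero"
| jacobi: "meq (LAdd (LAdd (LBr (LBr s t) u) (LBr (LBr t u) s)) (LBr (LBr u s) t)) LZero"
| metabelian: "meq (LBr (LBr s t) (LBr u v)) LZero"

(* B is an F_r-algebra with designated free base a 1, ..., a r of the copy of F_r:
   the subalgebra generated by a 1..a r is the free metabelian Lie algebra on them,
   i.e. two Lie terms in variables 1..r agree at (a 1,...,a r) iff they are equal
   in the free metabelian Lie algebra F_r. *)
definition fr_algebra :: "('k::field \<Rightarrow> 'b::ab_group_add \<Rightarrow> 'b) \<Rightarrow> ('b \<Rightarrow> 'b \<Rightarrow> 'b) \<Rightarrow> nat \<Rightarrow> (nat \<Rightarrow> 'b) \<Rightarrow> bool" where
  "fr_algebra scale br r a \<longleftrightarrow>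
     (\<forall>s t :: 'k lterm. lvars s \<subseteq> {1..r} \<longrightarrow> lvars t \<subseteq> {1..r} \<longrightarrow>
        (leval scale br a s = leval scale br a t \<longleftrightarrow> meq s t))"

end

theory Submission
  imports Defs
begin

lemma lie_facts:
  assumes lie: "lie_algebra scale br"
  shows "module scale" "br 0 y = 0" "br y 0 = 0" "br x y = - br y x"
    "br (x + z) y = br x y + br z y" "br y (x + z) = br y x + br y z"
    "br (scale c x) y = scale c (br x y)" "br y (scale c x) = scale c (br y x)"
    "br x x = 0"
proof -
  have L: "\<And>x y z. br (x + y) z = br x z + br y z" "\<And>x y z. br x (y + z) = br x y + br x z"
    "\<And>x. br x x = 0"
    using lie unfolding lie_algebra_def by auto
  show "module scale" "br (x + z) y = br x y + br z y" "br y (x + z) = br y x + br y z"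
    "br (scale c x) y = scale c (br x y)" "br y (scale c x) = scale c (br y x)" "br x x = 0"
    using lie unfolding lie_algebra_def by auto
  have "br (0+0) y = br 0 y + br 0 y" by (rule L(1))
  then show "br 0 y = 0" by simp
  have "br y (0+0) = br y 0 + br y 0" by (rule L(2))
  then show "br y 0 = 0" by simp
  have "0 = br (x+y) (x+y)" using L(3) by simp
  also have "\<dots> = br x (x+y) + br y (x+y)" by (rule L(1))
  also have "\<dots> = (br x x + br x y) + (br y x + br y y)" using L(2) by simp
  also have "\<dots> = br x y + br y x" using L(3) by simp
  finally show "br x y = - br y x" by (simp add: eq_neg_iff_add_eq_0)
qed

definition SC :: "('b::ab_group_add \<Rightarrow> 'b \<Rightarrow> 'b) \<Rightarrow> 'b set" where
  "SC br = {x. \<forall>p q. br x (br p q) = 0}"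

lemma subspace_kill:
  assumes lie: "lie_algebra scale br"
  shows "module.subspace scale {v. br u v = 0}"
proof -
  interpret module scale by (rule lie_facts(1)[OF lie])
  show ?thesis
    by (rule subspaceI) (auto simp: lie_facts(1-3,5-9)[OF lie])
qed

lemma subspace_SC:
  assumes lie: "lie_algebra scale br"
  shows "module.subspace scale (SC br)"
proof -
  interpret module scale by (rule lie_facts(1)[OF lie])
  show ?thesis
    by (rule subspaceI) (auto simp: SC_def lie_facts(1-3,5-9)[OF lie])
qed

lemma SC_iff:
  assumes lie: "lie_algebra scale br"
    and Phi1: "\<forall>x1 x2 x3 x4. br (br x1 x2) (br x3 x4) = 0"
    and Phi3: "\<forall>x y z. x \<noteq> 0 \<and> br x y = 0 \<and> br x z = 0 \<longrightarrow> br y z = 0"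
  shows "(\<forall>y. br (br b y) b = 0) \<longleftrightarrow> b \<in> SC br"
proof
  assume h: "\<forall>y. br (br b y) b = 0"
  show "b \<in> SC br"
  proof (cases "\<exists>y. br b y \<noteq> 0")
    case True
    then obtain y where y: "br b y \<noteq> 0" by blast
    show ?thesis unfolding SC_def
    proof (intro CollectI allI)
      fix p q
      show "br b (br p q) = 0" using Phi3 y h Phi1 by blast
    qed
  next
    case False then show ?thesis by (auto simp: SC_def)
  qed
next
  assume "b \<in> SC br"
  then show "\<forall>y. br (br b y) b = 0"
    by (auto simp: SC_def lie_facts(4)[OF lie, of "br b _" b])
qed

lemma SC_fit:
  assumes lie: "lie_algebra scale br"
    and Phi1: "\<forall>x1 x2 x3 x4. br (br x1 x2) (br x3 x4) = 0"
    and x: "x \<in> SC br"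
  shows "x \<in> fitting scale br"
proof -
  interpret module scale by (rule lie_facts(1)[OF lie])
  define I where "I = span (insert x {br p q | p q. True})"
  have xI: "x \<in> I" unfolding I_def by (rule span_base) simp
  have killx: "\<forall>v\<in>I. br x v = 0"
  proof -
    have "I \<subseteq> {v. br x v = 0}" unfolding I_def
      by (rule span_minimal) (use x lie_facts(1-3,5-9)[OF lie] subspace_kill[OF lie] in \<open>auto simp: SC_def\<close>)
    then show ?thesis by auto
  qed
  have killbr: "\<forall>v\<in>I. br (br p q) v = 0" for p q
  proof -
    have "I \<subseteq> {v. br (br p q) v = 0}" unfolding I_def
    proof (rule span_minimal)
      show "insert x {br p q |p q. True} \<subseteq> {v. br (br p q) v = 0}"
        using x Phi1 lie_facts(4)[OF lie, of "br p q" x] by (auto simp: SC_def)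
    qed (rule subspace_kill[OF lie])
    then show ?thesis by auto
  qed
  have allk: "\<forall>u\<in>I. \<forall>v\<in>I. br u v = 0"
  proof -
    have "span (insert x {br p q | p q. True}) \<subseteq> {u. \<forall>v\<in>I. br u v = 0}"
    proof (rule span_minimal)
      show "insert x {br p q |p q. True} \<subseteq> {u. \<forall>v\<in>I. br u v = 0}"
        using killx killbr by auto
      show "subspace {u. \<forall>v\<in>I. br u v = 0}"
        by (rule subspaceI) (auto simp: lie_facts(1-3,5-9)[OF lie])
    qed
    then show ?thesis unfolding I_def[symmetric] by auto
  qed
  have ideal: "lie_ideal scale br I"
    unfolding lie_ideal_def
  proof
    show "subspace I" unfolding I_def by simp
    show "\<forall>x\<in>I. \<forall>y. br x y \<in> I" unfolding I_def by (auto intro: span_base)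
  qed
  have "lower_central scale br I 1 = {0}"
  proof -
    have "{br u v |u v. u \<in> lower_central scale br I 0 \<and> v \<in> I} = {0}"
      using allk xI by auto (metis xI allk)
    then show ?thesis by simp
  qed
  then have "nilpotent_ideal scale br I" using ideal unfolding nilpotent_ideal_def by blast
  then have "x \<in> \<Union>{I. nilpotent_ideal scale br I}" using xI by blast
  then show ?thesis unfolding fitting_def by (rule span_base)
qed

lemma nil_ideal_prop:
  assumes lie: "lie_algebra scale br"
    and Phi1: "\<forall>x1 x2 x3 x4. br (br x1 x2) (br x3 x4) = 0"
    and Phi2: "\<forall>x y. br (br x y) x = 0 \<and> br (br x y) y = 0 \<longrightarrow> br x y = 0"
    and nI: "nilpotent_ideal scale br I" and xI: "x \<in> I"
  shows "br (br x y) x = 0"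
proof -
  interpret module scale by (rule lie_facts(1)[OF lie])
  define z where "z = rec_nat (br x y) (\<lambda>_ w. br w x)"
  have z0: "z 0 = br x y" and zS: "\<And>n. z (Suc n) = br (z n) x" by (simp_all add: z_def)
  have idl: "\<forall>x\<in>I. \<forall>y. br x y \<in> I" using nI unfolding nilpotent_ideal_def lie_ideal_def by blast
  have zin: "z n \<in> lower_central scale br I n" for n
  proof (induction n)
    case 0 then show ?case using idl xI z0 by simp
  next
    case (Suc n) then show ?case using xI zS
      by (auto intro!: span_base)
  qed
  obtain N where N: "lower_central scale br I N = {0}" using nI unfolding nilpotent_ideal_def by blast
  have zN: "z N = 0" using zin[of N] N by simp
  have isbr: "\<exists>p q. z k = br p q" for k by (cases k) (auto simp: z0 zS)
  have step: "z (Suc (Suc k)) = 0 \<Longrightarrow> z (Suc k) = 0" for k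
  proof -
    assume a: "z (Suc (Suc k)) = 0"
    obtain p q where pq: "z k = br p q" using isbr by blast
    have "br (br (z k) x) (z k) = 0" using Phi1 pq by simp
    moreover have "br (br (z k) x) x = 0" using a zS by simp
    ultimately have "br (z k) x = 0" using Phi2 by blast
    then show ?thesis using zS by simp
  qed
  have down: "z (Suc n) = 0 \<Longrightarrow> z 1 = 0" for n
    by (induction n) (use step in auto)
  have "z 1 = 0"
  proof (cases N)
    case 0 then show ?thesis using zN zS[of 0] lie_facts(2)[OF lie] by simp
  next
    case (Suc M) then show ?thesis using zN down by blast
  qed
  then show ?thesis using z0 zS[of 0] by simp
qed

fun hv :: "'k::field lterm \<Rightarrow> 'k \<times> 'k \<times> 'k" where
  "hv (LVar i) = (if i = 1 then (1,0,0) else if i = 2 then (0,1,0) else (0,0,0))"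
| "hv LZero = (0,0,0)"
| "hv (LAdd s t) = (case hv s of (a,b,c) \<Rightarrow> case hv t of (a',b',c') \<Rightarrow> (a+a',b+b',c+c'))"
| "hv (LNeg t) = (case hv t of (a,b,c) \<Rightarrow> (-a,-b,-c))"
| "hv (LSmul k t) = (case hv t of (a,b,c) \<Rightarrow> (k*a,k*b,k*c))"
| "hv (LBr s t) = (case hv s of (a,b,c) \<Rightarrow> case hv t of (a',b',c') \<Rightarrow> (0,0,a*b'-a'*b))"

lemma hv_sound: "meq s t \<Longrightarrow> hv s = hv t"
  by (induction rule: meq.induct) (auto split: prod.splits simp: algebra_simps)

lemma not_meq: "\<not> meq (LBr (LVar 1) (LVar 2) :: 'k::field lterm) LZero"
proof
  assume "meq (LBr (LVar 1) (LVar 2) :: 'k lterm) LZero"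
  then have "hv (LBr (LVar 1) (LVar 2) :: 'k lterm) = hv LZero" by (rule hv_sound)
  then show False by simp
qed

theorem lemma3p3:
  fixes scale :: "'k::field \<Rightarrow> 'b::ab_group_add \<Rightarrow> 'b" and br :: "'b \<Rightarrow> 'b \<Rightarrow> 'b"
  assumes lie: "lie_algebra scale br"
    and Phi1: "\<forall>x1 x2 x3 x4. br (br x1 x2) (br x3 x4) = 0"
    and Phi2: "\<forall>x y. br (br x y) x = 0 \<and> br (br x y) y = 0 \<longrightarrow> br x y = 0"
    and Phi3: "\<forall>x y z. x \<noteq> 0 \<and> br x y = 0 \<and> br x z = 0 \<longrightarrow> br y z = 0"
  shows "{b. \<forall>y. br (br b y) b = 0} = fitting scale br \<and>
         (\<forall>r a. 2 \<le> r \<and> fr_algebra scale br r a \<longrightarrow>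
            {b. \<forall>i\<in>{1..r}. br (br b (a i)) b = 0} = fitting scale br)"
proof -
  interpret module scale by (rule lie_facts(1)[OF lie])
  have eqSC: "{b. \<forall>y. br (br b y) b = 0} = SC br"
    using SC_iff[OF lie Phi1 Phi3] by blast
  have fitSC: "fitting scale br \<subseteq> SC br"
    unfolding fitting_def
  proof (rule span_minimal)
    show "\<Union>{I. nilpotent_ideal scale br I} \<subseteq> SC br"
    proof
      fix x assume "x \<in> \<Union>{I. nilpotent_ideal scale br I}"
      then obtain I where "nilpotent_ideal scale br I" "x \<in> I" by blast
      then have "\<forall>y. br (br x y) x = 0" using nil_ideal_prop[OF lie Phi1 Phi2] by blast
      then show "x \<in> SC br" using eqSC by blast
    qed
  qed (rule subspace_SC[OF lie])
  have SCfit: "SC br \<subseteq> fitting scale br" using SC_fit[OF lie Phi1] by blast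
  have part1: "{b. \<forall>y. br (br b y) b = 0} = fitting scale br"
    using eqSC fitSC SCfit by blast
  show ?thesis
  proof (intro conjI allI impI)
    show "{b. \<forall>y. br (br b y) b = 0} = fitting scale br" by (rule part1)
    fix r a assume ra: "2 \<le> r \<and> fr_algebra scale br r a"
    have sub: "{b. \<forall>i\<in>{1..r}. br (br b (a i)) b = 0} \<subseteq> SC br"
    proof
      fix b assume "b \<in> {b. \<forall>i\<in>{1..r}. br (br b (a i)) b = 0}"
      then have hb: "\<forall>i\<in>{1..r}. br (br b (a i)) b = 0" by simp
      show "b \<in> SC br"
      proof (cases "\<exists>i\<in>{1..r}. br b (a i) \<noteq> 0")
        case True
        then obtain i where i: "i \<in> {1..r}" "br b (a i) \<noteq> 0" by blast
        show ?thesis unfolding SC_def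
        proof (intro CollectI allI)
          fix p q
          show "br b (br p q) = 0" using Phi3 i hb Phi1 by blast
        qed
      next
        case False
        show ?thesis
        proof (cases "b = 0")
          case True then show ?thesis by (simp add: SC_def lie_facts(1-3,5-9)[OF lie])
        next
          case bn: False
          have "br b (a 1) = 0" "br b (a 2) = 0" using False ra by auto
          then have a12: "br (a 1) (a 2) = 0" using Phi3 bn by blast
          have "leval scale br a (LBr (LVar 1) (LVar 2) :: 'k lterm) = leval scale br a LZero"
            using a12 by simp
          moreover have "lvars (LBr (LVar 1) (LVar 2) :: 'k lterm) \<subseteq> {1..r}" using ra by auto
          moreover have "lvars (LZero :: 'k lterm) \<subseteq> {1..r}" by simp
          moreover have "\<forall>s t :: 'k lterm. lvars s \<subseteq> {1..r} \<longrightarrow> lvars t \<subseteq> {1..r} \<longrightarrow>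
              (leval scale br a s = leval scale br a t \<longleftrightarrow> meq s t)"
            using ra unfolding fr_algebra_def by blast
          ultimately have "meq (LBr (LVar 1) (LVar 2) :: 'k lterm) LZero"
            by blast
          then show ?thesis using not_meq by blast
        qed
      qed
    qed
    have sup: "SC br \<subseteq> {b. \<forall>i\<in>{1..r}. br (br b (a i)) b = 0}"
      using eqSC by blast
    show "{b. \<forall>i\<in>{1..r}. br (br b (a i)) b = 0} = fitting scale br"
      using sub sup eqSC part1 by blast
  qed
qed

end
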